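(* Let $X\subset\mathbb{R}^d$ be compact and let $K\colon\mathbb{R}\times\mathbb{R}\to\mathbb{R}$ be a continuous positive definite kernel with $|K(s,t)|\le1$. Let $Z=\mathbb{R}^d\times\mathbb{R}\times\mathbb{R}$, and for $z=(a,b,t)\in Z$ put $\psi_z(x)=K(\langle a,x\rangle+b,t)$. For a finite Borel measure $\rho$ on $Z$ let $K_\rho(x,x')=\int_Z\psi_z(x)\psi_z(x')\,d\rho(z)$. Then for every finite Borel measure $\rho$ on $Z$ and every $\epsilon>0$ there exist $z_1,\dots,z_m\in Z$ and weights $w_1,\dots,w_m\ge0$ such that $$\sup_{x,x'\in X}\Big|K_\rho(x,x')-\sum_{j=1}^m w_j\psi_{z_j}(x)\psi_{z_j}(x')\Big|<\epsilon.$$ *)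

theory Defs
  imports "HOL-Analysis.Analysis"
begin

definition pos_def_kernel :: "(real \<Rightarrow> real \<Rightarrow> real) \<Rightarrow> bool" where
  "pos_def_kernel K \<longleftrightarrow> (\<forall>s t. K s t = K t s) \<and>
     (\<forall>(n::nat) (t::nat \<Rightarrow> real) (c::nat \<Rightarrow> real).
        (\<Sum>i<n. \<Sum>j<n. c i * c j * K (t i) (t j)) \<ge> 0)"

definition psi :: "(real \<Rightarrow> real \<Rightarrow> real) \<Rightarrow> ('a::euclidean_space \<times> real \<times> real) \<Rightarrow> 'a \<Rightarrow> real" where
  "psi K z x = (case z of (a, b, t) \<Rightarrow> K (inner a x + b) t)"

definition K_rho :: "(real \<Rightarrow> real \<Rightarrow> real) \<Rightarrow> ('a::euclidean_space \<times> real \<times> real) measure \<Rightarrow> 'a \<Rightarrow> 'a \<Rightarrow> real" where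
  "K_rho K \<rho> x x' = (\<integral>z. psi K z x * psi K z x' \<partial>\<rho>)"

end

theory Submission
  imports Defs
begin

lemma psi_cont:
  assumes "continuous_on UNIV (\<lambda>(s, t). K s t)"
  shows "continuous_on UNIV (\<lambda>p::('a::euclidean_space\<times>real\<times>real)\<times>'a. psi K (fst p) (snd p))"
proof -
  have e: "(\<lambda>p::('a\<times>real\<times>real)\<times>'a. psi K (fst p) (snd p)) =
     (\<lambda>(s, t). K s t) \<circ> (\<lambda>p. (inner (fst (fst p)) (snd p) + fst (snd (fst p)), snd (snd (fst p))))"
    by (auto simp: psi_def split: prod.splits)
  show ?thesis unfolding e
    by (rule continuous_on_compose[OF _ continuous_on_subset[OF assms]]) (auto intro!: continuous_intros)
qed

lemma G_cont:
  assumes "continuous_on UNIV (\<lambda>(s, t). K s t)"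
  shows "continuous_on UNIV (\<lambda>p::('a::euclidean_space\<times>real\<times>real)\<times>('a\<times>'a).
     psi K (fst p) (fst (snd p)) * psi K (fst p) (snd (snd p)))"
proof -
  have c: "continuous_on UNIV (\<lambda>p::('a\<times>real\<times>real)\<times>'a. psi K (fst p) (snd p))"
    using psi_cont[OF assms] .
  have p1: "continuous_on UNIV (\<lambda>p::('a\<times>real\<times>real)\<times>('a\<times>'a). (fst p, fst (snd p)))"
    by (intro continuous_intros)
  have p2: "continuous_on UNIV (\<lambda>p::('a\<times>real\<times>real)\<times>('a\<times>'a). (fst p, snd (snd p)))"
    by (intro continuous_intros)
  have 1: "continuous_on UNIV (\<lambda>p::('a\<times>real\<times>real)\<times>('a\<times>'a). psi K (fst p) (fst (snd p)))"
    using continuous_on_compose[OF p1 continuous_on_subset[OF c]] by (simp add: o_def)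
  have 2: "continuous_on UNIV (\<lambda>p::('a\<times>real\<times>real)\<times>('a\<times>'a). psi K (fst p) (snd (snd p)))"
    using continuous_on_compose[OF p2 continuous_on_subset[OF c]] by (simp add: o_def)
  show ?thesis by (intro continuous_on_mult 1 2)
qed


lemma psi_bound: "(\<And>s t. \<bar>K s t\<bar> \<le> 1) \<Longrightarrow> \<bar>psi K z x\<bar> \<le> 1"
  by (auto simp: psi_def split: prod.splits)

lemma F_bound: "(\<And>s t. \<bar>K s t\<bar> \<le> 1) \<Longrightarrow> \<bar>psi K z x * psi K z y\<bar> \<le> 1"
  using psi_bound[of K z x] psi_bound[of K z y]
  by (simp add: abs_mult mult_le_one)

theorem lemma2:
  fixes X :: "'a::euclidean_space set"
    and K :: "real \<Rightarrow> real \<Rightarrow> real"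
    and \<rho> :: "('a \<times> real \<times> real) measure"
    and \<epsilon> :: real
  assumes "compact X"
    and "continuous_on UNIV (\<lambda>(s, t). K s t)"
    and "pos_def_kernel K"
    and "\<And>s t. \<bar>K s t\<bar> \<le> 1"
    and "sets \<rho> = sets borel"
    and "finite_measure \<rho>"
    and "\<epsilon> > 0"
  shows "\<exists>(m::nat) (z::nat \<Rightarrow> 'a \<times> real \<times> real) (w::nat \<Rightarrow> real).
           (\<forall>j\<in>{1..m}. w j \<ge> 0) \<and>
           (\<exists>\<delta> < \<epsilon>. \<forall>x\<in>X. \<forall>x'\<in>X.
              \<bar>K_rho K \<rho> x x' - (\<Sum>j=1..m. w j * psi K (z j) x * psi K (z j) x')\<bar> \<le> \<delta>)"
proof -
  interpret finite_measure \<rho> by fact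
  have sp: "space \<rho> = UNIV"
    by (metis assms(5) sets_eq_imp_space_eq space_borel)
  define \<mu> where "\<mu> = measure \<rho> UNIV"
  have \<mu>0: "\<mu> \<ge> 0" by (simp add: \<mu>_def)
  have borel_sets: "B \<in> sets \<rho>" if "B \<in> sets borel" for B using that assms(5) by simp
  have eUNIV: "emeasure \<rho> UNIV = ennreal \<mu>"
    using emeasure_eq_measure sp \<mu>_def by metis
  obtain C where C: "compact C" "measure \<rho> (UNIV - C) < \<epsilon>/4"
  proof (cases "\<mu> < \<epsilon>/4")
    case True
    then show ?thesis using that[of "{}"] by (simp add: \<mu>_def)
  next
    case False
    have "ennreal (\<mu> - \<epsilon>/4) < ennreal \<mu>"
      using False assms(7) by (subst ennreal_less_iff) auto
    also have "\<dots> = (SUP K \<in> {K. K \<subseteq> UNIV \<and> compact K}. emeasure \<rho> K)"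
      using inner_regular[OF assms(5), of UNIV] eUNIV sp by simp
    finally obtain C where "compact C" "ennreal (\<mu> - \<epsilon>/4) < emeasure \<rho> C"
      by (auto simp: less_SUP_iff)
    then have "\<mu> - \<epsilon>/4 < measure \<rho> C"
      using False by (simp add: emeasure_eq_measure ennreal_less_iff)
    moreover have "measure \<rho> (UNIV - C) = \<mu> - measure \<rho> C"
      unfolding \<mu>_def
    proof (rule finite_measure_Diff)
      show "UNIV \<in> sets \<rho>" using sets.top sp by metis
      show "C \<in> sets \<rho>" by (intro borel_sets borel_closed compact_imp_closed \<open>compact C\<close>)
    qed simp
    ultimately show ?thesis using that \<open>compact C\<close> by auto
  qed
  have Csets: "C \<in> sets \<rho>"
    by (intro borel_sets borel_closed compact_imp_closed C)
  have Cc: "UNIV - C \<in> sets \<rho>" using sets.compl_sets[OF Csets] sp by simp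
  define \<eta> where "\<eta> = \<epsilon> / (4 * (\<mu> + 1))"
  have \<eta>0: "\<eta> > 0" using assms(7) \<mu>0 by (simp add: \<eta>_def)
  define G where "G = (\<lambda>p::('a\<times>real\<times>real)\<times>('a\<times>'a).
     psi K (fst p) (fst (snd p)) * psi K (fst p) (snd (snd p)))"
  have Gc: "continuous_on UNIV G" unfolding G_def by (rule G_cont[OF assms(2)])
  have "uniformly_continuous_on (C \<times> (X \<times> X)) G"
    by (intro compact_uniformly_continuous continuous_on_subset[OF Gc] compact_Times C assms(1)) auto
  then obtain d where d: "d > 0" "\<And>p q. p \<in> C \<times> (X \<times> X) \<Longrightarrow> q \<in> C \<times> (X \<times> X) \<Longrightarrow> dist q p < d \<Longrightarrow> dist (G q) (G p) < \<eta>"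
    unfolding uniformly_continuous_on_def using \<eta>0 by metis
  have "C \<subseteq> (\<Union>c\<in>C. ball c d)" using d(1) by auto
  then obtain T where T: "T \<subseteq> C" "finite T" "C \<subseteq> (\<Union>c\<in>T. ball c d)"
    by (metis compactE_image C(1) open_ball)
  obtain h where h: "bij_betw h {1..card T} T" using ex_bij_betw_nat_finite_1[OF T(2)] by blast
  define m where "m = card T"
  define A where "A i = C \<inter> ball (h i) d - (\<Union>j\<in>{1..<i}. ball (h j) d)" for i
  have Asets: "A i \<in> sets \<rho>" for i
    unfolding A_def by (intro sets.Diff sets.Int Csets borel_sets borel_open sets.finite_UN) auto
  have hC: "h i \<in> C" if "i \<in> {1..m}" for i
    using h that T(1) unfolding m_def bij_betw_def by auto
  have uniq: "\<exists>i\<in>{1..m}. z \<in> A i \<and> dist z (h i) < d \<and> (\<forall>j\<in>{1..m}. j \<noteq> i \<longrightarrow> z \<notin> A j)" if "z \<in> C" for z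
  proof -
    have "\<exists>i. i \<in> {1..m} \<and> z \<in> ball (h i) d"
    proof -
      obtain c where c: "c \<in> T" "z \<in> ball c d" using T(3) \<open>z \<in> C\<close> by blast
      then obtain i where "i \<in> {1..m}" "c = h i" using h unfolding m_def bij_betw_def by blast
      then show ?thesis using c by blast
    qed
    define i where "i = (LEAST i. i \<in> {1..m} \<and> z \<in> ball (h i) d)"
    have i: "i \<in> {1..m}" "z \<in> ball (h i) d"
      using LeastI_ex[OF \<open>\<exists>i. _\<close>] unfolding i_def by auto
    have nl: "\<not> (j \<in> {1..m} \<and> z \<in> ball (h j) d)" if "j < i" for j
      using not_less_Least[OF that[unfolded i_def]] unfolding i_def by blast
    have "z \<in> A i" unfolding A_def using i nl \<open>z \<in> C\<close> by auto
    moreover have "z \<notin> A j" if "j \<in> {1..m}" "j \<noteq> i" for j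
    proof (cases "j < i")
      case True then show ?thesis using nl[of j] that unfolding A_def by auto
    next
      case False then show ?thesis using i that unfolding A_def by auto
    qed
    ultimately show ?thesis using i by (auto simp: dist_commute)
  qed
  define w where "w i = measure \<rho> (A i)" for i
  have main: "\<bar>K_rho K \<rho> x x' - (\<Sum>j=1..m. w j * psi K (h j) x * psi K (h j) x')\<bar> \<le> \<epsilon>/2"
    if x: "x \<in> X" "x' \<in> X" for x x'
  proof -
    define F where "F z = psi K z x * psi K z x'" for z
    have FG: "F z = G (z, (x, x'))" for z by (simp add: F_def G_def)
    have Fc: "continuous_on UNIV F"
      unfolding FG by (rule continuous_on_compose[OF _ continuous_on_subset[OF Gc], unfolded o_def]) (auto intro!: continuous_intros)
    have Fm: "F \<in> borel_measurable \<rho>"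
      using borel_measurable_continuous_onI[OF Fc] measurable_cong_sets[OF assms(5) refl] by blast
    have Fi: "integrable \<rho> F"
      by (rule integrable_const_bound[where B=1]) (auto simp: F_def F_bound[where K=K, OF assms(4)] Fm)
    define g where "g z = (\<Sum>j=1..m. indicator (A j) z * F (h j))" for z
    have ii: "integrable \<rho> (\<lambda>z. indicator (A j) z * F (h j))" for j
      using Asets by (intro integrable_mult_left integrable_real_indicator) (auto simp: emeasure_eq_measure)
    have gi: "integrable \<rho> g" unfolding g_def by (rule Bochner_Integration.integrable_sum) (rule ii)
    have intg: "integral\<^sup>L \<rho> g = (\<Sum>j=1..m. w j * F (h j))"
      unfolding g_def
      by (subst Bochner_Integration.integral_sum[OF ii]) (simp add: w_def sp)
    have bnd: "\<bar>F z - g z\<bar> \<le> \<eta> + indicator (UNIV - C) z" for z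
    proof (cases "z \<in> C")
      case True
      then obtain i where i: "i \<in> {1..m}" "z \<in> A i" "dist z (h i) < d" "\<forall>j\<in>{1..m}. j \<noteq> i \<longrightarrow> z \<notin> A j"
        using uniq by blast
      have "g z = F (h i)" unfolding g_def
        by (subst sum.remove[OF _ i(1)]) (use i in auto)
      moreover have "dist (G (h i, x, x')) (G (z, x, x')) < \<eta>"
        using d(2)[of "(z,x,x')" "(h i, x, x')"] True hC[OF i(1)] x i(3)
        by (simp add: dist_Pair_Pair dist_commute)
      ultimately show ?thesis using True by (simp add: FG dist_real_def abs_minus_commute)
    next
      case False
      then have "z \<notin> A j" for j unfolding A_def by auto
      then have "g z = 0" unfolding g_def by simp
      moreover have "\<bar>psi K z x * psi K z x'\<bar> \<le> 1" using F_bound[where K=K, OF assms(4)] by blast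
      ultimately show ?thesis using False \<eta>0 by (simp add: F_def)
    qed
    have ci: "integrable \<rho> (\<lambda>z. \<eta> + indicator (UNIV - C) z)"
      using Cc by (intro Bochner_Integration.integrable_add integrable_real_indicator) (auto simp: emeasure_eq_measure sp)
    have "K_rho K \<rho> x x' - (\<Sum>j=1..m. w j * psi K (h j) x * psi K (h j) x') = integral\<^sup>L \<rho> (\<lambda>z. F z - g z)"
      using Bochner_Integration.integral_diff[OF Fi gi] intg by (simp add: K_rho_def F_def[abs_def] mult.assoc)
    also have "\<bar>\<dots>\<bar> \<le> integral\<^sup>L \<rho> (\<lambda>z. \<bar>F z - g z\<bar>)"
      by (rule integral_abs_bound)
    also have "\<dots> \<le> integral\<^sup>L \<rho> (\<lambda>z. \<eta> + indicator (UNIV - C) z)"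
      by (intro integral_mono ci bnd) (use Fi gi in auto)
    also have "\<dots> = \<eta> * \<mu> + measure \<rho> (UNIV - C)"
      using Cc by (subst Bochner_Integration.integral_add) (auto simp: sp \<mu>_def emeasure_eq_measure)
    also have "\<eta> * \<mu> \<le> \<epsilon>/4"
      using \<mu>0 assms(7) by (simp add: \<eta>_def field_simps)
    finally show ?thesis using C(2) by linarith
  qed
  show ?thesis
    apply (rule exI[of _ m], rule exI[of _ h], rule exI[of _ w])
    using main assms(7) by (auto simp: w_def intro!: exI[of _ "\<epsilon>/2"])
qed

end
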